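(* Let $C\subseteq\mathbb{R}^n$ and $\bar x\in C$. If $C$ is amenable at $\bar x$, then $C$ is smoothly approximately convex at $\bar x$.
   Context: A curve $\gamma:[a,b]\to C$ is a smooth curve segment in $C$ if it extends to a $\mathcal{C}^{(1)}$-smooth map from an open neighborhood of $[a,b]$ into $\mathbb{R}^n$. A set $C\subseteq\mathbb{R}^n$ is smoothly approximately convex at $\bar x\in C$ if for every $\epsilon>0$ there is a neighborhood $W$ of $\bar x$ such that for all $x,x'\in C\cap W$ there is a smooth curve segment $\gamma:[0,1]\to C$ with $\gamma(0)=x$, $\gamma(1)=x'$ and $\|\gamma'(t)-(x'-x)\|\le\epsilon\|x'-x\|$ for all $t\in[0,1]$. A set $C\subseteq\mathbb{R}^n$ is amenable at $\bar x\in C$ if there exist an open neighborhood $V$ of $\bar x$, a $\mathcal{C}^{(1)}$ map $F:V\to\mathbb{R}^m$ and a closed convex set $D\subseteq\mathbb{R}^m$ such that $C\cap V=\{x\in V: F(x)\in D\}$ and the only vector $y\in N_D(F(\bar x))$ with $\nabla F(\bar x)^\top y=0$ is $y=0$; here $N_D(z)=\{y:\langle y,d-z\rangle\le 0\ \forall d\in D\}$ is the normal cone of the convex set $D$. *)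

theory Defs
  imports "HOL-Analysis.Analysis"
begin

definition smooth_curve_segment :: "'a::euclidean_space set \<Rightarrow> real \<Rightarrow> real \<Rightarrow> (real \<Rightarrow> 'a) \<Rightarrow> bool" where
  "smooth_curve_segment C a b \<gamma> \<longleftrightarrow>
     (\<forall>t\<in>{a..b}. \<gamma> t \<in> C) \<and>
     (\<exists>U g g'. open U \<and> {a..b} \<subseteq> U \<and>
        (\<forall>t\<in>U. (g has_vector_derivative g' t) (at t)) \<and> continuous_on U g' \<and>
        (\<forall>t\<in>{a..b}. g t = \<gamma> t))"

definition smoothly_approx_convex :: "'a::euclidean_space set \<Rightarrow> 'a \<Rightarrow> bool" where
  "smoothly_approx_convex C xbar \<longleftrightarrow>
     (\<forall>\<epsilon>>0. \<exists>W. open W \<and> xbar \<in> W \<and>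
        (\<forall>x\<in>C \<inter> W. \<forall>x'\<in>C \<inter> W. \<exists>\<gamma>. smooth_curve_segment C 0 1 \<gamma> \<and>
            \<gamma> 0 = x \<and> \<gamma> 1 = x' \<and>
            (\<forall>t\<in>{0..1}. norm (vector_derivative \<gamma> (at t within {0..1}) - (x' - x))
                            \<le> \<epsilon> * norm (x' - x))))"

definition normal_cone_cvx :: "'b::real_inner set \<Rightarrow> 'b \<Rightarrow> 'b set" where
  "normal_cone_cvx D z = {y. \<forall>d\<in>D. inner y (d - z) \<le> 0}"

definition amenable_via :: "'a::euclidean_space set \<Rightarrow> 'a \<Rightarrow> 'a set \<Rightarrow> ('a \<Rightarrow> 'b::euclidean_space)
     \<Rightarrow> 'b set \<Rightarrow> bool" where
  "amenable_via C xbar V F D \<longleftrightarrow>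
     open V \<and> xbar \<in> V \<and>
     (\<exists>F'. (\<forall>x\<in>V. (F has_derivative blinfun_apply (F' x)) (at x)) \<and> continuous_on V F' \<and>
        closed D \<and> convex D \<and> C \<inter> V = {x\<in>V. F x \<in> D} \<and>
        (\<forall>y\<in>normal_cone_cvx D (F xbar). adjoint (blinfun_apply (F' xbar)) y = 0 \<longrightarrow> y = 0))"

end

theory Submission
  imports Defs
begin

lemma cone_univ:
  fixes L :: "'a::euclidean_space \<Rightarrow> 'b::euclidean_space" and D :: "'b set" and Fb :: 'b
  assumes lin: "linear L" and cvx: "convex D" and FbD: "Fb \<in> D"
   and cq: "\<forall>y\<in>normal_cone_cvx D Fb. adjoint L y = 0 \<longrightarrow> y = 0"
  shows "\<exists>h s d. s \<ge> 0 \<and> d \<in> D \<and> w = L h - s *\<^sub>R (d - Fb)"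
proof -
  define K where "K = {L h - s *\<^sub>R (d - Fb) | h s d. s \<ge> 0 \<and> d \<in> D}"
  have zK: "0 \<in> K" unfolding K_def by (rule CollectI, rule exI[of _ 0], rule exI[of _ 0], rule exI[of _ Fb])
      (simp add: FbD linear_0[OF lin])
  have coneK: "c *\<^sub>R k \<in> K" if "k \<in> K" "c \<ge> 0" for k c
  proof -
    from that obtain h s d where "s \<ge> 0" "d \<in> D" "k = L h - s *\<^sub>R (d - Fb)" unfolding K_def by blast
    then show ?thesis unfolding K_def using that(2)
      by (intro CollectI exI[of _ "c *\<^sub>R h"] exI[of _ "c * s"] exI[of _ d])
        (simp add: linear_scale[OF lin] scaleR_diff_right)
  qed
  have convK: "convex K"
    unfolding convex_def
  proof (intro ballI allI impI)
    fix k1 k2 and u v :: real assume "k1 \<in> K" "k2 \<in> K" and uv: "0 \<le> u" "0 \<le> v" "u + v = 1"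
    from \<open>k1 \<in> K\<close> obtain h1 s1 d1 where 1: "s1 \<ge> 0" "d1 \<in> D" "k1 = L h1 - s1 *\<^sub>R (d1 - Fb)" unfolding K_def by blast
    from \<open>k2 \<in> K\<close> obtain h2 s2 d2 where 2: "s2 \<ge> 0" "d2 \<in> D" "k2 = L h2 - s2 *\<^sub>R (d2 - Fb)" unfolding K_def by blast
    define s where "s = u * s1 + v * s2"
    have s0: "s \<ge> 0" unfolding s_def using 1 2 uv by simp
    show "u *\<^sub>R k1 + v *\<^sub>R k2 \<in> K"
    proof (cases "s = 0")
      case True
      then have "u * s1 = 0" "v * s2 = 0" using 1 2 uv s_def
        by (smt (verit) mult_nonneg_nonneg)+
      then have z1: "u *\<^sub>R (s1 *\<^sub>R (d1 - Fb)) = 0" "v *\<^sub>R (s2 *\<^sub>R (d2 - Fb)) = 0"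
        by (simp_all only: scaleR_scaleR scaleR_zero_left)
      have "u *\<^sub>R k1 + v *\<^sub>R k2 = L (u *\<^sub>R h1 + v *\<^sub>R h2) - u *\<^sub>R (s1 *\<^sub>R (d1 - Fb)) - v *\<^sub>R (s2 *\<^sub>R (d2 - Fb))"
        unfolding 1(3) 2(3) by (simp add: linear_add[OF lin] linear_scale[OF lin] scaleR_diff_right algebra_simps)
      then have "u *\<^sub>R k1 + v *\<^sub>R k2 = L (u *\<^sub>R h1 + v *\<^sub>R h2) - 0 *\<^sub>R (Fb - Fb)"
        by (simp only: z1) simp
      then show ?thesis unfolding K_def using FbD by blast
    next
      case False
      then have sp: "s > 0" using s0 by simp
      define d where "d = (u * s1 / s) *\<^sub>R d1 + (v * s2 / s) *\<^sub>R d2"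
      have "d \<in> D" unfolding d_def
        using convexD[OF cvx 1(2) 2(2), of "u * s1 / s" "v * s2 / s"] sp 1 2 uv
        by (simp add: s_def add_divide_distrib[symmetric])
      have "s *\<^sub>R (d - Fb) = (u * s1) *\<^sub>R d1 + (v * s2) *\<^sub>R d2 - s *\<^sub>R Fb"
        unfolding d_def using sp by (simp add: scaleR_diff_right scaleR_add_right)
      also have "\<dots> = u *\<^sub>R (s1 *\<^sub>R (d1 - Fb)) + v *\<^sub>R (s2 *\<^sub>R (d2 - Fb))"
        unfolding s_def by (simp add: scaleR_diff_right algebra_simps)
      finally have "u *\<^sub>R k1 + v *\<^sub>R k2 = L (u *\<^sub>R h1 + v *\<^sub>R h2) - s *\<^sub>R (d - Fb)"
        unfolding 1(3) 2(3) by (simp add: linear_add[OF lin] linear_scale[OF lin] scaleR_diff_right algebra_simps)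
      then show ?thesis unfolding K_def using s0 \<open>d \<in> D\<close> by blast
    qed
  qed
  have "closure K = UNIV"
  proof (rule ccontr)
    assume "closure K \<noteq> UNIV"
    then obtain z where z: "z \<notin> closure K" by blast
    obtain a b where ab: "inner a z < b" "\<forall>x\<in>closure K. inner a x > b"
      using separating_hyperplane_closed_point[OF convex_closure[OF convK] closed_closure z] by blast
    have b0: "b < 0" using ab(2) zK closure_subset by fastforce
    have pos: "inner a k \<ge> 0" if "k \<in> K" for k
    proof (rule ccontr)
      assume "\<not> inner a k \<ge> 0"
      then have neg: "inner a k < 0" by simp
      define c where "c = b / inner a k"
      have "c \<ge> 0" unfolding c_def using b0 neg by (simp add: divide_nonpos_neg)
      then have "c *\<^sub>R k \<in> closure K" using coneK that closure_subset by blast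
      then have "inner a (c *\<^sub>R k) > b" using ab by blast
      moreover have "inner a (c *\<^sub>R k) = b" unfolding c_def using neg by simp
      ultimately show False by simp
    qed
    have a0: "a \<noteq> 0" using ab b0 by auto
    have Lh: "inner a (L h) = 0" for h
    proof -
      have "L h \<in> K" "L (-h) \<in> K" unfolding K_def using FbD
        by (metis (mono_tags, lifting) CollectI diff_zero order_refl scale_zero_left)+
      then have "inner a (L h) \<ge> 0" "inner a (L (-h)) \<ge> 0" using pos by auto
      then show ?thesis by (simp add: linear_neg[OF lin])
    qed
    have "adjoint L a = 0"
    proof -
      have "inner (adjoint L a) (adjoint L a) = inner (L (adjoint L a)) a"
        using adjoint_works[OF lin] by blast
      also have "\<dots> = 0" using Lh by (simp add: inner_commute)
      finally show ?thesis by simp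
    qed
    moreover have "a \<in> normal_cone_cvx D Fb"
      unfolding normal_cone_cvx_def
    proof (intro CollectI ballI)
      fix d assume "d \<in> D"
      then have "L 0 - 1 *\<^sub>R (d - Fb) \<in> K" unfolding K_def
        by (intro CollectI exI[of _ 0] exI[of _ "1::real"] exI[of _ d]) simp
      then have "inner a (L 0 - 1 *\<^sub>R (d - Fb)) \<ge> 0" using pos by blast
      then show "inner a (d - Fb) \<le> 0" by (simp add: linear_0[OF lin] inner_diff_right)
    qed
    ultimately show False using cq a0 by blast
  qed
  then have "interior K = UNIV" using convex_interior_closure[OF convK] by simp
  then have "K = UNIV" using interior_subset by blast
  then show ?thesis unfolding K_def by blast
qed

lemma cc1:
  fixes D :: "'b::real_vector set"
  assumes cvx: "convex D" and FbD: "Fb \<in> D" and fin: "finite I"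
    and c0: "\<And>i. i \<in> I \<Longrightarrow> c i \<ge> 0" and cs: "sum c I \<le> 1"
    and eD: "\<And>i. i \<in> I \<Longrightarrow> e i \<in> D"
  shows "Fb + (\<Sum>i\<in>I. c i *\<^sub>R (e i - Fb)) \<in> D"
proof (cases "sum c I = 0")
  case True
  then have "\<forall>i\<in>I. c i = 0" using sum_nonneg_eq_0_iff[OF fin] c0 by blast
  then show ?thesis using FbD by simp
next
  case False
  define T where "T = sum c I"
  have Tp: "T > 0" using False c0 sum_nonneg[of I c] unfolding T_def by force
  have "(\<Sum>i\<in>I. (c i / T) *\<^sub>R e i) \<in> D"
    by (rule convex_sum[OF fin cvx]) (use Tp c0 eD in \<open>auto simp: T_def sum_divide_distrib[symmetric]\<close>)
  then have "(1 - T) *\<^sub>R Fb + T *\<^sub>R (\<Sum>i\<in>I. (c i / T) *\<^sub>R e i) \<in> D"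
    using convexD[OF cvx FbD, of _ "1 - T" T] Tp cs T_def by auto
  moreover have "(1 - T) *\<^sub>R Fb + T *\<^sub>R (\<Sum>i\<in>I. (c i / T) *\<^sub>R e i) = Fb + (\<Sum>i\<in>I. c i *\<^sub>R (e i - Fb))"
    using Tp by (simp add: scaleR_sum_right scaleR_diff_right sum_subtractf T_def scaleR_sum_left[symmetric] algebra_simps)
  ultimately show ?thesis by simp
qed

lemma cc2:
  fixes D :: "'b::real_vector set"
  assumes cvx: "convex D" and FbD: "Fb \<in> D" and fin: "finite I"
    and c0: "\<And>i. i \<in> I \<Longrightarrow> c i \<ge> 0" and c0': "\<And>i. i \<in> I \<Longrightarrow> c' i \<ge> 0"
    and cs: "(\<Sum>i\<in>I. c i + c' i) \<le> 1"
    and eD: "\<And>i. i \<in> I \<Longrightarrow> e i \<in> D" and eD': "\<And>i. i \<in> I \<Longrightarrow> e' i \<in> D"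
  shows "Fb + (\<Sum>i\<in>I. c i *\<^sub>R (e i - Fb) + c' i *\<^sub>R (e' i - Fb)) \<in> D"
proof -
  define cc where "cc p = (if snd p then c (fst p) else c' (fst p))" for p
  define ee where "ee p = (if snd p then e (fst p) else e' (fst p))" for p
  have sumeq: "(\<Sum>p\<in>I \<times> UNIV. f p) = (\<Sum>i\<in>I. f (i, True) + f (i, False))" for f :: "_ \<Rightarrow> 'c::comm_monoid_add"
  proof -
    have "(\<Sum>p\<in>I \<times> UNIV. f p) = (\<Sum>i\<in>I. \<Sum>b\<in>UNIV. f (i, b))"
      by (subst sum.cartesian_product) (simp add: split_def)
    then show ?thesis by (simp add: UNIV_bool add.commute)
  qed
  have "Fb + (\<Sum>p\<in>I \<times> UNIV. cc p *\<^sub>R (ee p - Fb)) \<in> D"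
    by (rule cc1[OF cvx FbD]) (use fin c0 c0' cs eD eD' in \<open>auto simp: cc_def ee_def sumeq\<close>)
  then show ?thesis by (simp add: sumeq cc_def ee_def)
qed

lemma cq_construct:
  fixes L :: "'a::euclidean_space \<Rightarrow> 'b::euclidean_space" and D :: "'b set" and Fb :: 'b
  assumes lin: "linear L" and cvx: "convex D" and FbD: "Fb \<in> D"
   and cq: "\<forall>y\<in>normal_cone_cvx D Fb. adjoint L y = 0 \<longrightarrow> y = 0"
  shows "\<exists>M J c r. linear M \<and> linear J \<and> r > 0 \<and> (\<forall>y. L (M y) - J y = y) \<and>
            (\<forall>u. norm u \<le> r \<longrightarrow> Fb + L c + J u \<in> D)"
proof -
  have "\<forall>w. \<exists>h s d. s \<ge> 0 \<and> d \<in> D \<and> w = L h - s *\<^sub>R (d - Fb)"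
    using cone_univ[OF assms] by blast
  then obtain H S Dd where HSD: "\<And>w. S w \<ge> 0" "\<And>w. Dd w \<in> D" "\<And>w. w = L (H w) - S w *\<^sub>R (Dd w - Fb)"
    by metis
  define M where "M y = (\<Sum>i\<in>Basis. (y \<bullet> i) *\<^sub>R H i)" for y
  define J where "J y = (\<Sum>i\<in>Basis. (y \<bullet> i) *\<^sub>R (S i *\<^sub>R (Dd i - Fb)))" for y
  define T where "T = (\<Sum>i\<in>Basis. 2 * S i + S (-i))"
  have T0: "T \<ge> 0" unfolding T_def using HSD(1) by (intro sum_nonneg) (simp add: add_nonneg_nonneg)
  define \<tau> where "\<tau> = 1 / (T + 1)"
  have tau0: "\<tau> > 0" unfolding \<tau>_def using T0 by simp
  have tauT: "\<tau> * T \<le> 1" unfolding \<tau>_def using T0 by (simp add: divide_le_eq)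
  define c where "c = \<tau> *\<^sub>R (\<Sum>i\<in>Basis. H i + H (-i))"
  have linM: "linear M" unfolding M_def
    by (rule linearI) (simp_all add: inner_add_left scaleR_add_left sum.distrib scaleR_sum_right)
  have linJ: "linear J" unfolding J_def
    by (rule linearI) (simp_all add: inner_add_left scaleR_add_left sum.distrib scaleR_sum_right distrib_right mult.assoc)
  have LM: "L (M y) - J y = y" for y
  proof -
    have "L (M y) = (\<Sum>i\<in>Basis. (y \<bullet> i) *\<^sub>R L (H i))"
      unfolding M_def by (simp add: linear_sum[OF lin] linear_scale[OF lin])
    then have "L (M y) - J y = (\<Sum>i\<in>Basis. (y \<bullet> i) *\<^sub>R (L (H i) - S i *\<^sub>R (Dd i - Fb)))"
      unfolding J_def by (simp add: sum_subtractf scaleR_diff_right)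
    also have "\<dots> = (\<Sum>i\<in>Basis. (y \<bullet> i) *\<^sub>R i)" using HSD(3) by (metis (no_types))
    also have "\<dots> = y" by (rule euclidean_representation)
    finally show ?thesis .
  qed
  have Lc: "L c = (\<Sum>i\<in>Basis. (\<tau> * S i) *\<^sub>R (Dd i - Fb) + (\<tau> * S (-i)) *\<^sub>R (Dd (-i) - Fb))"
  proof -
    have "L c = \<tau> *\<^sub>R (\<Sum>i\<in>Basis. L (H i) + L (H (-i)))"
      unfolding c_def by (simp add: linear_sum[OF lin] linear_scale[OF lin] linear_add[OF lin])
    also have "\<dots> = \<tau> *\<^sub>R (\<Sum>i\<in>Basis. S i *\<^sub>R (Dd i - Fb) + S (-i) *\<^sub>R (Dd (-i) - Fb))"
    proof -
      have "L (H i) + L (H (-i)) = S i *\<^sub>R (Dd i - Fb) + S (-i) *\<^sub>R (Dd (-i) - Fb)" for i :: 'b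
      proof -
        have "L (H i) = i + S i *\<^sub>R (Dd i - Fb)" "L (H (-i)) = -i + S (-i) *\<^sub>R (Dd (-i) - Fb)"
          using HSD(3)[of i] HSD(3)[of "-i"] by (simp_all add: algebra_simps)
        then show ?thesis by simp
      qed
      then show ?thesis by simp
    qed
    finally show ?thesis by (simp add: scaleR_sum_right scaleR_add_right)
  qed
  have main: "Fb + L c + J u \<in> D" if u: "norm u \<le> \<tau>" for u
  proof -
    have ui: "\<bar>u \<bullet> i\<bar> \<le> \<tau>" if "i \<in> Basis" for i :: 'b
      using Basis_le_norm[OF that, of u] u by simp
    have eq: "Fb + L c + J u = Fb + (\<Sum>i\<in>Basis. ((\<tau> + u \<bullet> i) * S i) *\<^sub>R (Dd i - Fb) + (\<tau> * S (-i)) *\<^sub>R (Dd (-i) - Fb))"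
      unfolding Lc J_def by (simp add: sum.distrib[symmetric] algebra_simps)
    have "Fb + (\<Sum>i\<in>Basis. ((\<tau> + u \<bullet> i) * S i) *\<^sub>R (Dd i - Fb) + (\<tau> * S (-i)) *\<^sub>R (Dd (-i) - Fb)) \<in> D"
    proof (rule cc2[OF cvx FbD finite_Basis])
      show "0 \<le> (\<tau> + u \<bullet> i) * S i" if "i \<in> Basis" for i :: 'b
        using ui[OF that] HSD(1)[of i] by (intro mult_nonneg_nonneg) auto
      show "0 \<le> \<tau> * S (-i)" for i :: 'b using tau0 HSD(1)[of "-i"] by simp
      have "(\<Sum>i\<in>Basis. (\<tau> + u \<bullet> i) * S i + \<tau> * S (- i)) \<le> (\<Sum>i\<in>Basis. \<tau> * (2 * S i + S (-i)))"
      proof (rule sum_mono)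
        fix i :: 'b assume "i \<in> Basis"
        then have "(\<tau> + u \<bullet> i) * S i \<le> (2 * \<tau>) * S i"
          using ui[OF \<open>i \<in> Basis\<close>] HSD(1)[of i] by (intro mult_right_mono) auto
        then show "(\<tau> + u \<bullet> i) * S i + \<tau> * S (- i) \<le> \<tau> * (2 * S i + S (-i))"
          by (simp add: algebra_simps)
      qed
      also have "\<dots> = \<tau> * T" unfolding T_def by (simp add: sum_distrib_left)
      finally show "(\<Sum>i\<in>Basis. (\<tau> + u \<bullet> i) * S i + \<tau> * S (- i)) \<le> 1" using tauT by linarith
    qed (use HSD(2) in auto)
    then show ?thesis using eq by (simp only: add.assoc)
  qed
  show ?thesis using linM linJ LM main tau0 by blast
qed

lemma psi_inverse:
  fixes F :: "'a::euclidean_space \<Rightarrow> 'b::euclidean_space" and F' :: "'a \<Rightarrow> 'a \<Rightarrow>\<^sub>L 'b"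
    and M :: "'b \<Rightarrow>\<^sub>L 'a" and J :: "'b \<Rightarrow>\<^sub>L 'b"
  assumes oV: "open V" and xV: "xbar \<in> V"
    and derF: "\<forall>x\<in>V. (F has_derivative blinfun_apply (F' x)) (at x)"
    and contF': "continuous_on V F'"
    and LM: "\<forall>y. F' xbar (M y) - J y = y"
  obtains U' Vs G G' where "open U'" "(xbar, F xbar, 0) \<in> U'" "open Vs" "(xbar, F xbar, 0) \<in> Vs"
    "homeomorphism U' Vs (\<lambda>p::'a\<times>'b\<times>'b. (fst p, fst (snd p), F (fst p + M (snd (snd p))) - fst (snd p) - J (snd (snd p)))) G"
    "\<And>y. y \<in> Vs \<Longrightarrow> (G has_derivative G' y) (at y)"
    "\<And>y k. y \<in> Vs \<Longrightarrow> (fst (G' y k), fst (snd (G' y k)),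
        F' (fst (G y) + M (snd (snd (G y)))) (fst (G' y k) + M (snd (snd (G' y k)))) - fst (snd (G' y k)) - J (snd (snd (G' y k)))) = k"
proof -
  define \<Psi> where "\<Psi> = (\<lambda>p::'a\<times>'b\<times>'b. (fst p, fst (snd p), F (fst p + M (snd (snd p))) - fst (snd p) - J (snd (snd p))))"
  define Sf where "Sf = (\<lambda>h::'a\<times>'b\<times>'b. fst h + M (snd (snd h)))"
  define E3f where "E3f = (\<lambda>w::'b. ((0::'a), (0::'b), w))"
  define K0f where "K0f = (\<lambda>h::'a\<times>'b\<times>'b. (fst h, fst (snd h), - fst (snd h) - J (snd (snd h))))"
  have blS: "bounded_linear Sf" unfolding Sf_def linear_conv_bounded_linear[symmetric]
    by (rule linearI) (simp_all add: blinfun.add_right blinfun.scaleR_right algebra_simps)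
  have blE: "bounded_linear E3f" unfolding E3f_def linear_conv_bounded_linear[symmetric]
    by (rule linearI) (simp_all add: blinfun.add_right blinfun.scaleR_right algebra_simps)
  have blK: "bounded_linear K0f" unfolding K0f_def linear_conv_bounded_linear[symmetric]
    by (rule linearI) (simp_all add: blinfun.add_right blinfun.scaleR_right blinfun.diff_right blinfun.minus_right algebra_simps)
  define \<Psi>' where "\<Psi>' = (\<lambda>p::'a\<times>'b\<times>'b. Blinfun K0f + (Blinfun E3f o\<^sub>L (F' (Sf p) o\<^sub>L Blinfun Sf)))"
  have \<Psi>'_apply: "blinfun_apply (\<Psi>' p) h = (fst h, fst (snd h), F' (fst p + M (snd (snd p))) (fst h + M (snd (snd h))) - fst (snd h) - J (snd (snd h)))" for p h
    unfolding \<Psi>'_def using blS blE blK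
    by (simp add: bounded_linear_Blinfun_apply blinfun.add_left) (simp add: Sf_def E3f_def K0f_def)
  define U0 where "U0 = Sf -` V"
  have oU0: "open U0" unfolding U0_def
    using continuous_on_open_vimage[of UNIV Sf] oV linear_continuous_on[OF blS] by auto
  have p0U0: "(xbar, F xbar, 0) \<in> U0" unfolding U0_def Sf_def using xV by simp
  have derPsi: "(\<Psi> has_derivative blinfun_apply (\<Psi>' p)) (at p)" if "p \<in> U0" for p
  proof -
    have "Sf p \<in> V" using that U0_def by simp
    then have dF: "(F has_derivative blinfun_apply (F' (Sf p))) (at (Sf p))" using derF by blast
    have dS: "(Sf has_derivative Sf) (at p)" using blS by (rule bounded_linear_imp_has_derivative)
    have dFS: "((\<lambda>p. F (Sf p)) has_derivative (\<lambda>h. F' (Sf p) (Sf h))) (at p)"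
      by (rule has_derivative_compose[OF dS dF])
    have PsiS: "\<Psi> = (\<lambda>p. (fst p, fst (snd p), F (Sf p) - fst (snd p) - J (snd (snd p))))"
      unfolding \<Psi>_def Sf_def by simp
    have dd: "(\<Psi> has_derivative (\<lambda>h. (fst h, fst (snd h), F' (Sf p) (Sf h) - fst (snd h) - J (snd (snd h))))) (at p)"
      using dFS unfolding PsiS
      by (intro derivative_eq_intros) auto
    have eq: "blinfun_apply (\<Psi>' p) = (\<lambda>h. (fst h, fst (snd h), F' (Sf p) (Sf h) - fst (snd h) - J (snd (snd h))))"
      by (rule ext) (simp add: \<Psi>'_apply Sf_def)
    show ?thesis unfolding eq by (rule dd)
  qed
  have contPsi': "continuous_on U0 \<Psi>'"
  proof -
    have "continuous_on U0 (\<lambda>p. F' (Sf p))"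
      by (rule continuous_on_compose2[OF contF']) (use linear_continuous_on[OF blS] in \<open>auto simp: U0_def\<close>)
    then show ?thesis unfolding \<Psi>'_def by (intro continuous_intros)
  qed
  define L where "L = F' xbar"
  define invf where "invf = Blinfun (\<lambda>k::'a\<times>'b\<times>'b. (fst k, fst (snd k), snd (snd k) - L (fst k) + fst (snd k)))"
  have blinv: "bounded_linear (\<lambda>k::'a\<times>'b\<times>'b. (fst k, fst (snd k), snd (snd k) - L (fst k) + fst (snd k)))"
    unfolding linear_conv_bounded_linear[symmetric]
    by (rule linearI) (simp_all add: blinfun.add_right blinfun.scaleR_right blinfun.diff_right blinfun.minus_right algebra_simps)
  have Sx: "Sf (xbar, F xbar, 0) = xbar" unfolding Sf_def by simp
  have invid: "invf o\<^sub>L \<Psi>' (xbar, F xbar, 0) = id_blinfun"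
  proof (rule blinfun_eqI)
    fix h :: "'a\<times>'b\<times>'b"
    have "L (M (snd (snd h))) - J (snd (snd h)) = snd (snd h)" using LM L_def by blast
    then show "(invf o\<^sub>L \<Psi>' (xbar, F xbar, 0)) h = id_blinfun h"
      unfolding invf_def using blinv
      by (simp add: \<Psi>'_apply bounded_linear_Blinfun_apply L_def[symmetric] blinfun.add_right prod_eq_iff algebra_simps)
  qed
  obtain U' Vs G G' where U': "open U'" "U' \<subseteq> U0" "(xbar, F xbar, 0) \<in> U'" "open Vs" "\<Psi> (xbar, F xbar, 0) \<in> Vs"
    "homeomorphism U' Vs \<Psi> G" "\<And>y. y \<in> Vs \<Longrightarrow> (G has_derivative (G' y)) (at y)"
    "\<And>y. y \<in> Vs \<Longrightarrow> G' y = inv (blinfun_apply (\<Psi>'(G y)))"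
    "\<And>y. y \<in> Vs \<Longrightarrow> bij (blinfun_apply (\<Psi>'(G y)))"
    using inverse_function_theorem[OF oU0 derPsi contPsi' p0U0 invid] by blast
  have "\<Psi> (xbar, F xbar, 0) = (xbar, F xbar, 0)" unfolding \<Psi>_def by simp
  moreover have "\<And>y k. y \<in> Vs \<Longrightarrow> blinfun_apply (\<Psi>' (G y)) (G' y k) = k"
    using U'(8,9) by (simp add: bij_is_surj surj_f_inv_f)
  ultimately show ?thesis using that[of U' Vs G G'] U' unfolding \<Psi>_def by (simp add: \<Psi>'_apply)
qed

lemma norm_comb2:
  fixes u w :: "'a::real_normed_vector"
  assumes "0 \<le> \<alpha>" "0 \<le> \<beta>"
  shows "norm (\<alpha> *\<^sub>R u + \<beta> *\<^sub>R w) \<le> \<alpha> * norm u + \<beta> * norm w"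
proof -
  have "norm (\<alpha> *\<^sub>R u + \<beta> *\<^sub>R w) \<le> norm (\<alpha> *\<^sub>R u) + norm (\<beta> *\<^sub>R w)" by (rule norm_triangle_ineq)
  then show ?thesis using assms by simp
qed

lemma norm_comb3:
  fixes u w z :: "'a::real_normed_vector"
  assumes "0 \<le> \<alpha>" "0 \<le> \<beta>" "0 \<le> \<gamma>"
  shows "norm (\<alpha> *\<^sub>R u + \<beta> *\<^sub>R w + \<gamma> *\<^sub>R z) \<le> \<alpha> * norm u + \<beta> * norm w + \<gamma> * norm z"
proof -
  have "norm (\<alpha> *\<^sub>R u + \<beta> *\<^sub>R w + \<gamma> *\<^sub>R z) \<le> norm (\<alpha> *\<^sub>R u + \<beta> *\<^sub>R w) + norm (\<gamma> *\<^sub>R z)" by (rule norm_triangle_ineq)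
  then show ?thesis using assms norm_comb2[OF assms(1,2), of u w] by simp
qed

lemma vec_mvt:
  fixes f :: "real \<Rightarrow> 'a::real_normed_vector"
  assumes d: "\<And>s. s \<in> {a..b} \<Longrightarrow> (f has_vector_derivative f' s) (at s)"
    and B: "\<And>s. s \<in> {a..b} \<Longrightarrow> norm (f' s) \<le> B"
    and s: "s \<in> {a..b}" and t: "t \<in> {a..b}"
  shows "norm (f t - f s) \<le> B * \<bar>t - s\<bar>"
proof -
  have "norm (f t - f s) \<le> B * norm (t - s)"
  proof (rule differentiable_bound[where f'="\<lambda>s h. h *\<^sub>R f' s"])
    show "convex {a..b}" by simp
    show "(f has_derivative (\<lambda>h. h *\<^sub>R f' x)) (at x within {a..b})" if "x \<in> {a..b}" for x
      using d[OF that] unfolding has_vector_derivative_def by (rule has_derivative_subset) auto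
    show "onorm (\<lambda>h. h *\<^sub>R f' x) \<le> B" if "x \<in> {a..b}" for x
      using onorm_scaleR_left[OF bounded_linear_ident, of "f' x"] B[OF that] by (simp add: onorm_id)
  qed (use s t in auto)
  then show ?thesis by simp
qed

lemma mvt_F:
  fixes F :: "'a::euclidean_space \<Rightarrow> 'b::euclidean_space" and F' :: "'a \<Rightarrow> 'a \<Rightarrow>\<^sub>L 'b"
  assumes S: "convex S" and d: "\<And>y. y \<in> S \<Longrightarrow> (F has_derivative blinfun_apply (F' y)) (at y)"
    and B: "\<And>y. y \<in> S \<Longrightarrow> norm (F' y - L) \<le> \<eta>" and x: "x \<in> S" and x': "x' \<in> S"
  shows "norm (F x' - F x - L (x' - x)) \<le> \<eta> * norm (x' - x)"
proof -
  have "norm ((F x' - L x') - (F x - L x)) \<le> \<eta> * norm (x' - x)"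
  proof (rule differentiable_bound[OF S, where f'="\<lambda>y. blinfun_apply (F' y - L)"])
    show "((\<lambda>y. F y - L y) has_derivative blinfun_apply (F' y - L)) (at y within S)" if "y \<in> S" for y
    proof -
      have "((\<lambda>y. F y - L y) has_derivative (\<lambda>h. F' y h - L h)) (at y)"
        using d[OF that] by (intro derivative_eq_intros) auto
      moreover have "blinfun_apply (F' y - L) = (\<lambda>h. F' y h - L h)" by (rule ext) (simp add: blinfun.diff_left)
      ultimately show ?thesis by (simp add: has_derivative_at_withinI)
    qed
    show "onorm (blinfun_apply (F' y - L)) \<le> \<eta>" if "y \<in> S" for y
      using B[OF that] by (simp add: norm_blinfun.rep_eq)
  qed (use x x' in auto)
  then show ?thesis by (simp add: blinfun.diff_right algebra_simps)
qed

lemma curve_exists: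
  fixes F :: "'a::euclidean_space \<Rightarrow> 'b::euclidean_space" and F' :: "'a \<Rightarrow> 'a \<Rightarrow>\<^sub>L 'b"
    and M :: "'b \<Rightarrow>\<^sub>L 'a" and J :: "'b \<Rightarrow>\<^sub>L 'b" and c :: 'a and L :: "'a \<Rightarrow>\<^sub>L 'b"
    and G :: "'a \<times> 'b \<times> 'b \<Rightarrow> 'a \<times> 'b \<times> 'b" and G' :: "'a \<times> 'b \<times> 'b \<Rightarrow> 'a \<times> 'b \<times> 'b \<Rightarrow> 'a \<times> 'b \<times> 'b"
  assumes hU: "\<And>p. p \<in> U' \<Longrightarrow> G (fst p, fst (snd p), F (fst p + M (snd (snd p))) - fst (snd p) - J (snd (snd p))) = p"
    and hV: "\<And>y. y \<in> Vs \<Longrightarrow> (fst (G y), fst (snd (G y)), F (fst (G y) + M (snd (snd (G y)))) - fst (snd (G y)) - J (snd (snd (G y)))) = y"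
    and hc: "continuous_on Vs G"
    and hD: "\<And>y. y \<in> Vs \<Longrightarrow> (G has_derivative G' y) (at y)"
    and hR: "\<And>y k. y \<in> Vs \<Longrightarrow> (fst (G' y k), fst (snd (G' y k)),
        F' (fst (G y) + M (snd (snd (G y)))) (fst (G' y k) + M (snd (snd (G' y k)))) - fst (snd (G' y k)) - J (snd (snd (G' y k)))) = k"
    and derF: "\<forall>x\<in>V. (F has_derivative blinfun_apply (F' x)) (at x)"
    and contF': "continuous_on V F'"
    and r0V: "ball xbar rA \<subseteq> V"
    and r0L: "\<And>y. y \<in> ball xbar rA \<Longrightarrow> norm (F' y - L) \<le> \<eta>"
    and d2: "\<And>Y. dist Y (xbar, F xbar, 0) < dA \<Longrightarrow> Y \<in> Vs \<and> norm (snd (snd (G Y))) < dB"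
    and d2r0: "dA \<le> rA / 2" and Mdv: "norm M * dB \<le> rA / 2"
    and LM: "\<forall>y. L (M y) - J y = y"
    and Dball: "\<forall>u. norm u \<le> rB \<longrightarrow> F xbar + L c + J u \<in> D"
    and cvx: "convex D" and CV: "C \<inter> V = {x\<in>V. F x \<in> D}"
    and xC: "x \<in> C" and x'C: "x' \<in> C" and xr: "dist x xbar < r" and x'r: "dist x' xbar < r"
    and xU: "(x, F x, 0) \<in> U'" and x'U: "(x', F x', 0) \<in> U'"
    and Fx: "norm (F x - F xbar) < \<beta>" and Fx': "norm (F x' - F xbar) < \<beta>"
    and k0: "0 < \<kappa>" and rA: "0 < r" "r \<le> rA" and e0: "0 \<le> \<eta>" and eM: "\<eta> * norm M \<le> 1/2" and e1: "\<eta> \<le> 1"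
    and n1: "r * (1 + \<kappa> * norm c) \<le> dA / 8" and n2: "\<beta> \<le> dA / 4" and n3: "\<kappa> * r * (norm L * norm c) \<le> dA / 4"
    and n4: "\<kappa> * r \<le> 1"
    and n5: "4 * \<eta> + \<kappa> * r * (norm L + 1) + 2 * \<kappa> * \<beta> + 2 * \<kappa> * \<eta> * norm c \<le> \<tau>"
    and n6: "\<tau> \<le> \<kappa> * rB / 2" and n7: "\<kappa> * norm c + norm M * \<tau> \<le> \<epsilon>"
    and Lx: "L = F' xbar" and r1pos: "0 < rB"
  shows "\<exists>\<gamma>. smooth_curve_segment C 0 1 \<gamma> \<and> \<gamma> 0 = x \<and> \<gamma> 1 = x' \<and>
            (\<forall>t\<in>{0..1}. norm (vector_derivative \<gamma> (at t within {0..1}) - (x' - x)) \<le> \<epsilon> * norm (x' - x))"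
proof -
  define Fb where "Fb = F xbar"
  define p0 :: "'a \<times> 'b \<times> 'b" where "p0 = (xbar, Fb, 0)"
  define \<Delta> where "\<Delta> = x' - x"
  define \<rho> where "\<rho> = norm \<Delta>"
  define \<Delta>F where "\<Delta>F = F x' - F x"
  define \<theta> where "\<theta> t = \<kappa> * \<rho> * t * (1 - t)" for t :: real
  define \<theta>' where "\<theta>' t = \<kappa> * \<rho> * (1 - 2 * t)" for t :: real
  define b where "b t = F x + t *\<^sub>R \<Delta>F" for t :: real
  define p0c where "p0c = Fb + L c"
  define a where "a t = (1 - \<theta> t) *\<^sub>R b t + \<theta> t *\<^sub>R p0c" for t
  define a' where "a' t = (- \<theta>' t) *\<^sub>R b t + (1 - \<theta> t) *\<^sub>R \<Delta>F + \<theta>' t *\<^sub>R p0c" for t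
  define zt where "zt t = x + t *\<^sub>R \<Delta> + \<theta> t *\<^sub>R c" for t
  define zt' where "zt' t = \<Delta> + \<theta>' t *\<^sub>R c" for t
  define Y where "Y t = (zt t, a t, 0::'b)" for t
  define Y' where "Y' t = (zt' t, a' t, 0::'b)" for t
  define v where "v t = snd (snd (G (Y t)))" for t
  define \<gamma> where "\<gamma> t = zt t + M (v t)" for t
  define U where "U = {t. dist (Y t) p0 < dA}"
  define k where "k t = G' (Y t) (Y' t)" for t
  define vd where "vd t = snd (snd (k t))" for t
  define \<gamma>' where "\<gamma>' t = zt' t + M (vd t)" for t

  have rho0: "\<rho> \<ge> 0" unfolding \<rho>_def by simp
  have d2pos: "dA > 0"
  proof -
    have "0 < r * (1 + \<kappa> * norm c)" using rA k0 by (simp add: add_pos_nonneg)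
    then show ?thesis using n1 by linarith
  qed
  have rho2r: "\<rho> < 2 * r"
  proof -
    have "\<rho> \<le> dist x' xbar + dist x xbar" unfolding \<rho>_def \<Delta>_def by (metis dist_norm dist_triangle2)
    then show ?thesis using xr x'r by linarith
  qed
  have Yder: "(Y has_vector_derivative Y' t) (at t)" for t
    unfolding Y_def Y'_def zt_def zt'_def a_def a'_def \<theta>_def \<theta>'_def b_def
    apply (auto intro!: derivative_eq_intros simp: algebra_simps)
    apply (simp only: scaleR_add_left[symmetric])
    apply (rule arg_cong[where f="\<lambda>s. s *\<^sub>R \<Delta>F"])
    apply (simp add: algebra_simps)
    done
  have Ycont: "continuous_on UNIV Y"
    using Yder by (meson continuous_at_imp_continuous_on has_vector_derivative_continuous)
  have oU: "open U"
  proof -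
    have "continuous_on UNIV (\<lambda>t. dist (Y t) p0)" using Ycont by (intro continuous_intros) auto
    then have "\<forall>B. open B \<longrightarrow> open ((\<lambda>t. dist (Y t) p0) -` B)"
      using continuous_on_open_vimage[OF open_UNIV] by auto
    then have "open ((\<lambda>t. dist (Y t) p0) -` {..<dA})" by auto
    then show ?thesis unfolding U_def by (simp add: vimage_def)
  qed
  have th_bnd: "0 \<le> \<theta> t \<and> \<theta> t \<le> \<kappa> * \<rho> / 4" if "t \<in> {0..1}" for t
  proof -
    have "0 \<le> (t - 1/2) * (t - 1/2)" by simp
    then have "t * (1 - t) \<le> 1/4" by (simp add: algebra_simps)
    moreover have "t * (1 - t) \<ge> 0" using that by simp
    moreover have e: "\<theta> t = (\<kappa> * \<rho>) * (t * (1 - t))" unfolding \<theta>_def by (simp add: algebra_simps)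
    moreover have "\<kappa> * \<rho> \<ge> 0" using k0 rho0 by simp
    ultimately show ?thesis
      using mult_left_mono[of "t * (1 - t)" "1/4" "\<kappa> * \<rho>"] mult_nonneg_nonneg[of "\<kappa> * \<rho>" "t * (1 - t)"]
      by simp
  qed
  have th_r: "\<theta> t \<le> \<kappa> * r / 2" if "t \<in> {0..1}" for t
  proof -
    have "\<kappa> * \<rho> \<le> \<kappa> * (2 * r)" using rho2r k0 by (intro mult_left_mono) auto
    then show ?thesis using th_bnd[OF that] by simp
  qed
  have thp_bnd: "\<bar>\<theta>' t\<bar> \<le> \<kappa> * \<rho>" if "t \<in> {0..1}" for t
  proof -
    have "\<bar>1 - 2 * t\<bar> \<le> 1" using that by auto
    then show ?thesis unfolding \<theta>'_def using k0 rho0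
      by (simp add: abs_mult mult_left_le)
  qed
  have b_bnd: "norm (b t - Fb) \<le> \<beta>" if "t \<in> {0..1}" for t
  proof -
    have "b t - Fb = (1 - t) *\<^sub>R (F x - Fb) + t *\<^sub>R (F x' - Fb)"
      unfolding b_def \<Delta>F_def by (simp add: algebra_simps)
    then have "norm (b t - Fb) \<le> (1 - t) * norm (F x - Fb) + t * norm (F x' - Fb)"
      using that by (metis (no_types, lifting) abs_of_nonneg atLeastAtMost_iff diff_ge_0_iff_ge norm_scaleR norm_triangle_ineq order_trans_rules(23) order_trans_rules(23) dual_order.refl)
    also have "\<dots> \<le> (1 - t) * \<beta> + t * \<beta>"
      using that Fx Fx' unfolding Fb_def by (intro add_mono mult_left_mono) auto
    finally show ?thesis by (simp add: algebra_simps)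
  qed
  have bD: "b t \<in> D" if "t \<in> {0..1}" for t
  proof -
    have "x \<in> V" "x' \<in> V" using xr x'r rA r0V by (auto simp: dist_commute)
    then have "F x \<in> D" "F x' \<in> D" using xC x'C CV by auto
    moreover have "b t = (1 - t) *\<^sub>R F x + t *\<^sub>R F x'" unfolding b_def \<Delta>F_def by (simp add: algebra_simps)
    ultimately show ?thesis using convexD[OF cvx, of "F x" "F x'" "1 - t" t] that by auto
  qed
  have sub01: "{0..1} \<subseteq> U"
  proof
    fix t :: real assume t: "t \<in> {0..1}"
    have zb: "norm (zt t - xbar) < dA / 4"
    proof -
      have "zt t - xbar = (1 - t) *\<^sub>R (x - xbar) + t *\<^sub>R (x' - xbar) + \<theta> t *\<^sub>R c"
        unfolding zt_def \<Delta>_def by (simp add: algebra_simps)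
      then have "norm (zt t - xbar) \<le> (1 - t) * norm (x - xbar) + t * norm (x' - xbar) + \<theta> t * norm c"
        using t th_bnd[OF t] norm_comb3[of "1 - t" t "\<theta> t"] by simp
      also have "\<dots> \<le> (1 - t) * r + t * r + (\<kappa> * r / 2) * norm c"
        using t xr x'r th_r[OF t] by (intro add_mono mult_right_mono mult_left_mono) (auto simp: dist_norm)
      also have "\<dots> \<le> r * (1 + \<kappa> * norm c)" using rA k0 by (simp add: algebra_simps)
      finally show ?thesis using n1 d2pos by linarith
    qed
    have ab: "norm (a t - Fb) < 3 * dA / 4"
    proof -
      have "a t - Fb = (1 - \<theta> t) *\<^sub>R (b t - Fb) + \<theta> t *\<^sub>R L c"
        unfolding a_def p0c_def by (simp add: algebra_simps)
      then have "norm (a t - Fb) \<le> (1 - \<theta> t) * norm (b t - Fb) + \<theta> t * norm (L c)"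
        using th_bnd[OF t] th_r[OF t] n4 norm_comb2[of "1 - \<theta> t" "\<theta> t"] by simp
      also have "\<dots> \<le> 1 * \<beta> + (\<kappa> * r / 2) * (norm L * norm c)"
        using th_bnd[OF t] th_r[OF t] n4 b_bnd[OF t] norm_blinfun[of L c]
        by (intro add_mono mult_mono) auto
      also have "\<dots> < 3 * dA / 4" using n2 n3 d2pos by (simp add: field_simps)
      finally show ?thesis .
    qed
    have "dist (Y t) p0 \<le> norm (zt t - xbar) + norm (a t - Fb)"
      unfolding Y_def p0_def dist_norm using norm_Pair_le[of "zt t - xbar" "(a t - Fb, 0::'b)"]
      by (simp add: norm_Pair)
    then show "t \<in> U" unfolding U_def using zb ab by simp
  qed
  have Uprops: "Y t \<in> Vs \<and> norm (v t) < dB \<and> G (Y t) = (zt t, a t, v t) \<and> F (\<gamma> t) = a t + J (v t)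
      \<and> \<gamma> t \<in> ball xbar rA \<and> norm (zt t - xbar) < dA" if t: "t \<in> U" for t
  proof -
    have dY: "dist (Y t) (xbar, F xbar, 0) < dA" using t unfolding U_def p0_def Fb_def by simp
    then have YV: "Y t \<in> Vs" and vb: "norm (v t) < dB" using d2 unfolding v_def by auto
    have hv: "(fst (G (Y t)), fst (snd (G (Y t))), F (fst (G (Y t)) + M (snd (snd (G (Y t))))) - fst (snd (G (Y t))) - J (snd (snd (G (Y t))))) = Y t"
      by (rule hV[OF YV])
    have GY: "G (Y t) = (zt t, a t, v t)"
      using hv unfolding Y_def v_def by (simp add: prod_eq_iff)
    have FG: "F (\<gamma> t) = a t + J (v t)"
      using hv[unfolded GY] unfolding \<gamma>_def Y_def by (simp add: prod_eq_iff algebra_simps)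
    have zb: "norm (zt t - xbar) < dA"
    proof -
      have "norm (zt t - xbar) \<le> norm (Y t - p0)" unfolding Y_def p0_def using norm_fst_le[of "zt t - xbar" "(a t - Fb, 0::'b)"] by simp
      then show ?thesis using dY unfolding p0_def Fb_def dist_norm by simp
    qed
    have "norm (\<gamma> t - xbar) \<le> norm (zt t - xbar) + norm (M (v t))"
      unfolding \<gamma>_def by (metis add_diff_eq diff_add_eq norm_triangle_ineq)
    also have "\<dots> < rA / 2 + rA / 2"
    proof -
      have "norm (M (v t)) \<le> norm M * norm (v t)" by (rule norm_blinfun)
      also have "\<dots> \<le> norm M * dB" using vb by (intro mult_left_mono) auto
      finally show ?thesis using zb d2r0 Mdv by linarith
    qed
    finally have "\<gamma> t \<in> ball xbar rA" by (simp add: dist_norm norm_minus_commute)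
    then show ?thesis using YV vb GY FG zb by simp
  qed
  have vder: "(v has_vector_derivative vd t) (at t) \<and> (\<gamma> has_vector_derivative \<gamma>' t) (at t)" if t: "t \<in> U" for t
  proof -
    have YV: "Y t \<in> Vs" using Uprops[OF t] by simp
    have dG: "(G has_derivative G' (Y t)) (at (Y t))" by (rule hD[OF YV])
    have dY: "(Y has_derivative (\<lambda>h. h *\<^sub>R Y' t)) (at t)" using Yder[of t] unfolding has_vector_derivative_def .
    have dGY: "((\<lambda>s. G (Y s)) has_derivative (\<lambda>h. G' (Y t) (h *\<^sub>R Y' t))) (at t)"
      by (rule has_derivative_compose[OF dY dG])
    have blG: "bounded_linear (G' (Y t))" by (rule has_derivative_bounded_linear[OF dG])
    have "(\<lambda>h. G' (Y t) (h *\<^sub>R Y' t)) = (\<lambda>h. h *\<^sub>R k t)"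
      by (rule ext) (simp add: k_def linear_scale[OF bounded_linear.linear[OF blG]])
    then have dGYv: "((\<lambda>s. G (Y s)) has_vector_derivative k t) (at t)"
      using dGY unfolding has_vector_derivative_def by simp
    have dv: "(v has_vector_derivative vd t) (at t)"
      unfolding v_def[abs_def] vd_def
      by (rule bounded_linear.has_vector_derivative[OF bounded_linear_snd,
            OF bounded_linear.has_vector_derivative[OF bounded_linear_snd, OF dGYv]])
    have dz: "(zt has_vector_derivative zt' t) (at t)"
      unfolding zt_def[abs_def] zt'_def \<theta>_def \<theta>'_def
      by (auto intro!: derivative_eq_intros simp: algebra_simps)
    have "((\<lambda>s. zt s + M (v s)) has_vector_derivative (zt' t + M (vd t))) (at t)"
      by (rule has_vector_derivative_add[OF dz bounded_linear.has_vector_derivative[OF blinfun.bounded_linear_right dv]])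
    then show ?thesis using dv unfolding \<gamma>_def[abs_def] \<gamma>'_def by simp
  qed
  have rel: "F' (\<gamma> t) (zt' t + M (vd t)) - a' t - J (vd t) = 0 \<and> fst (k t) = zt' t \<and> fst (snd (k t)) = a' t"
    if t: "t \<in> U" for t
  proof -
    have YV: "Y t \<in> Vs" and GY: "G (Y t) = (zt t, a t, v t)" using Uprops[OF t] by auto
    have "(fst (G' (Y t) (Y' t)), fst (snd (G' (Y t) (Y' t))),
        F' (fst (G (Y t)) + M (snd (snd (G (Y t))))) (fst (G' (Y t) (Y' t)) + M (snd (snd (G' (Y t) (Y' t)))))
          - fst (snd (G' (Y t) (Y' t))) - J (snd (snd (G' (Y t) (Y' t))))) = Y' t"
      by (rule hR[OF YV])
    then have "(fst (k t), fst (snd (k t)), F' (\<gamma> t) (fst (k t) + M (vd t)) - fst (snd (k t)) - J (vd t)) = Y' t"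
      unfolding GY k_def[symmetric] vd_def[symmetric] by (simp add: \<gamma>_def)
    note E = this
    have h1: "fst (k t) = zt' t" using arg_cong[OF E, of fst] unfolding Y'_def by simp
    have h2: "fst (snd (k t)) = a' t" using arg_cong[OF E, of "\<lambda>p. fst (snd p)"] unfolding Y'_def by simp
    have h3: "F' (\<gamma> t) (fst (k t) + M (vd t)) - fst (snd (k t)) - J (vd t) = 0"
      using arg_cong[OF E, of "\<lambda>p. snd (snd p)"] unfolding Y'_def by simp
    show ?thesis using h1 h2 h3 by simp
  qed
  have inv_bnd: "norm w \<le> 2 * norm (F' (\<gamma> t) (M w) - J w)" if t: "t \<in> U" for t w
  proof -
    have gb: "\<gamma> t \<in> ball xbar rA" using Uprops[OF t] by simp
    have E: "norm (F' (\<gamma> t) - L) \<le> \<eta>" by (rule r0L[OF gb])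
    have eq: "F' (\<gamma> t) (M w) - J w = w + (F' (\<gamma> t) - L) (M w)"
      using LM[rule_format, of w] by (simp add: blinfun.diff_left algebra_simps)
    have "norm ((F' (\<gamma> t) - L) (M w)) \<le> norm (F' (\<gamma> t) - L) * norm (M w)" by (rule norm_blinfun)
    also have "\<dots> \<le> \<eta> * (norm M * norm w)"
      using E norm_blinfun[of M w] e0 by (intro mult_mono) auto
    also have "\<dots> = (\<eta> * norm M) * norm w" by (simp add: mult.assoc)
    also have "\<dots> \<le> (1/2) * norm w" using eM by (intro mult_right_mono) auto
    finally have "norm ((F' (\<gamma> t) - L) (M w)) \<le> norm w / 2" by simp
    moreover have "norm w \<le> norm (F' (\<gamma> t) (M w) - J w) + norm ((F' (\<gamma> t) - L) (M w))"
      unfolding eq by (metis add_diff_cancel norm_triangle_ineq4)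
    ultimately show ?thesis by linarith
  qed
  have xb: "x \<in> ball xbar rA" "x' \<in> ball xbar rA" using xr x'r rA by (auto simp: dist_commute)
  have mvt: "norm (\<Delta>F - L \<Delta>) \<le> \<eta> * \<rho>"
    unfolding \<Delta>F_def \<Delta>_def \<rho>_def
    by (rule mvt_F[OF convex_ball _ r0L xb(1) xb(2)]) (use derF r0V in auto)
  have dF_bnd: "norm \<Delta>F \<le> (norm L + 1) * \<rho>"
  proof -
    have "norm \<Delta>F \<le> norm (L \<Delta>) + norm (\<Delta>F - L \<Delta>)" by (metis add.commute diff_add_cancel norm_triangle_ineq)
    also have "\<dots> \<le> norm L * \<rho> + \<eta> * \<rho>" using mvt norm_blinfun[of L \<Delta>] unfolding \<rho>_def by linarith
    also have "\<dots> \<le> (norm L + 1) * \<rho>" using mult_right_mono[OF e1 rho0] by (simp add: algebra_simps)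
    finally show ?thesis .
  qed
  have vd_bnd: "norm (vd t) \<le> \<tau> * \<rho>" if t: "t \<in> {0..1}" for t
  proof -
    have tU: "t \<in> U" using sub01 t by auto
    define A where "A = F' (\<gamma> t)"
    have gb: "\<gamma> t \<in> ball xbar rA" using Uprops[OF tU] by simp
    have E: "norm (A - L) \<le> \<eta>" unfolding A_def by (rule r0L[OF gb])
    have r: "A (zt' t + M (vd t)) - a' t - J (vd t) = 0" using rel[OF tU] unfolding A_def by simp
    have RHS: "A (M (vd t)) - J (vd t) = (\<Delta>F - L \<Delta> - (A - L) \<Delta>) - \<theta> t *\<^sub>R \<Delta>F + \<theta>' t *\<^sub>R ((Fb - b t) - (A - L) c)"
    proof -
      have "A (M (vd t)) - J (vd t) = a' t - A (zt' t)" using r by (simp add: blinfun.add_right algebra_simps)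
      then show ?thesis unfolding a'_def zt'_def p0c_def
        by (simp add: blinfun.add_right blinfun.diff_left blinfun.scaleR_right algebra_simps)
    qed
    have n1': "norm (\<Delta>F - L \<Delta> - (A - L) \<Delta>) \<le> 2 * \<eta> * \<rho>"
    proof -
      have "norm (\<Delta>F - L \<Delta> - (A - L) \<Delta>) \<le> norm (\<Delta>F - L \<Delta>) + norm ((A - L) \<Delta>)" by (rule norm_triangle_ineq4)
      also have "norm ((A - L) \<Delta>) \<le> \<eta> * \<rho>"
        using norm_blinfun[of "A - L" \<Delta>] E rho0 unfolding \<rho>_def by (meson mult_right_mono norm_ge_zero order_trans)
      finally show ?thesis using mvt by linarith
    qed
    have n2': "norm (\<theta> t *\<^sub>R \<Delta>F) \<le> (\<kappa> * r / 2) * ((norm L + 1) * \<rho>)"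
    proof -
      have "norm (\<theta> t *\<^sub>R \<Delta>F) = \<theta> t * norm \<Delta>F" using th_bnd[OF t] by simp
      also have "\<dots> \<le> (\<kappa> * r / 2) * ((norm L + 1) * \<rho>)"
        by (rule mult_mono[OF th_r[OF t] dF_bnd]) (use k0 rA in auto)
      finally show ?thesis .
    qed
    have n3': "norm (\<theta>' t *\<^sub>R ((Fb - b t) - (A - L) c)) \<le> (\<kappa> * \<rho>) * (\<beta> + \<eta> * norm c)"
    proof -
      have "norm ((Fb - b t) - (A - L) c) \<le> norm (b t - Fb) + norm ((A - L) c)"
        by (metis norm_minus_commute norm_triangle_ineq4)
      also have "\<dots> \<le> \<beta> + \<eta> * norm c"
        using b_bnd[OF t] norm_blinfun[of "A - L" c] E by (meson add_mono mult_right_mono norm_ge_zero order_trans)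
      finally have "norm ((Fb - b t) - (A - L) c) \<le> \<beta> + \<eta> * norm c" .
      then have "\<bar>\<theta>' t\<bar> * norm ((Fb - b t) - (A - L) c) \<le> (\<kappa> * \<rho>) * (\<beta> + \<eta> * norm c)"
        by (rule mult_mono[OF thp_bnd[OF t]]) (use k0 rho0 in auto)
      then show ?thesis by simp
    qed
    have "norm (vd t) \<le> 2 * norm (A (M (vd t)) - J (vd t))" unfolding A_def by (rule inv_bnd[OF tU])
    also have "\<dots> \<le> 2 * (2 * \<eta> * \<rho> + (\<kappa> * r / 2) * ((norm L + 1) * \<rho>) + (\<kappa> * \<rho>) * (\<beta> + \<eta> * norm c))"
      unfolding RHS using n1' n2' n3' norm_triangle_ineq4 norm_triangle_ineq
      by (smt (verit, best))
    also have "\<dots> = \<rho> * (4 * \<eta> + \<kappa> * r * (norm L + 1) + 2 * \<kappa> * \<beta> + 2 * \<kappa> * \<eta> * norm c)"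
      by (simp add: algebra_simps)
    also have "\<dots> \<le> \<rho> * \<tau>" using n5 rho0 by (rule mult_left_mono)
    finally show ?thesis by (simp add: mult.commute)
  qed
  have gcont: "continuous_on U \<gamma>"
    using vder by (meson continuous_at_imp_continuous_on has_vector_derivative_continuous)
  have gV: "\<gamma> t \<in> V" if "t \<in> U" for t using Uprops[OF that] r0V by auto
  have Acont: "continuous_on U (\<lambda>t. F' (\<gamma> t))"
    by (rule continuous_on_compose2[OF contF' gcont]) (use gV in auto)
  define R where "R t = a' t - F' (\<gamma> t) (zt' t)" for t
  have Rcont: "continuous_on U R"
    unfolding R_def a'_def zt'_def \<theta>'_def \<theta>_def b_def
    by (intro continuous_intros Acont)
  have relR: "F' (\<gamma> t) (M (vd t)) - J (vd t) = R t" if "t \<in> U" for t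
    using rel[OF that] unfolding R_def by (simp add: blinfun.add_right algebra_simps)
  have vdcont: "continuous_on U vd"
    unfolding continuous_on_def
  proof
    fix s assume s: "s \<in> U"
    define g where "g t = 2 * (norm (R t - R s) + norm (F' (\<gamma> t) - F' (\<gamma> s)) * (norm M * norm (vd s)))" for t
    have ev: "eventually (\<lambda>t. norm (vd t - vd s) \<le> g t) (at s within U)"
    proof -
      have "norm (vd t - vd s) \<le> g t" if t: "t \<in> U" for t
      proof -
        have eq: "F' (\<gamma> t) (M (vd t - vd s)) - J (vd t - vd s) = (R t - R s) - (F' (\<gamma> t) - F' (\<gamma> s)) (M (vd s))"
          using relR[OF t] relR[OF s] by (simp add: blinfun.diff_right blinfun.diff_left algebra_simps)
        have "norm ((F' (\<gamma> t) - F' (\<gamma> s)) (M (vd s))) \<le> norm (F' (\<gamma> t) - F' (\<gamma> s)) * (norm M * norm (vd s))"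
          using norm_blinfun[of "F' (\<gamma> t) - F' (\<gamma> s)" "M (vd s)"] norm_blinfun[of M "vd s"]
          by (meson mult_left_mono norm_ge_zero order_trans)
        then have "norm ((R t - R s) - (F' (\<gamma> t) - F' (\<gamma> s)) (M (vd s))) \<le> norm (R t - R s) + norm (F' (\<gamma> t) - F' (\<gamma> s)) * (norm M * norm (vd s))"
          by (meson add_left_mono norm_triangle_ineq4 order_trans)
        then have a2: "2 * norm ((R t - R s) - (F' (\<gamma> t) - F' (\<gamma> s)) (M (vd s))) \<le> g t"
          unfolding g_def by simp
        have a1: "norm (vd t - vd s) \<le> 2 * norm ((R t - R s) - (F' (\<gamma> t) - F' (\<gamma> s)) (M (vd s)))"
          using inv_bnd[OF t, of "vd t - vd s"] unfolding eq .
        show ?thesis using a1 a2 by (rule order_trans)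
      qed
      then show ?thesis unfolding eventually_at_filter by (simp add: always_eventually)
    qed
    have R0: "((\<lambda>t. R t - R s) \<longlongrightarrow> 0) (at s within U)"
      using Rcont s unfolding continuous_on_def by (simp add: LIM_zero)
    have A0: "((\<lambda>t. F' (\<gamma> t) - F' (\<gamma> s)) \<longlongrightarrow> 0) (at s within U)"
      using Acont s unfolding continuous_on_def by (simp add: LIM_zero)
    have "(g \<longlongrightarrow> 2 * (0 + 0 * (norm M * norm (vd s)))) (at s within U)"
      unfolding g_def by (intro tendsto_intros tendsto_norm_zero R0 A0)
    then have "(g \<longlongrightarrow> 0) (at s within U)" by simp
    then have "((\<lambda>t. vd t - vd s) \<longlongrightarrow> 0) (at s within U)" by (rule Lim_null_comparison[OF ev])
    then show "(vd \<longlongrightarrow> vd s) (at s within U)" by (simp add: LIM_zero_iff)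
  qed
  have gcont': "continuous_on U \<gamma>'"
    unfolding \<gamma>'_def zt'_def \<theta>'_def by (intro continuous_intros vdcont)
  have v0: "v 0 = 0" and v1: "v 1 = 0" and g0: "\<gamma> 0 = x" and g1: "\<gamma> 1 = x'"
  proof -
    have Y0: "Y 0 = (x, F x, 0)" unfolding Y_def zt_def a_def b_def \<theta>_def by simp
    have Y1: "Y 1 = (x', F x', 0)" unfolding Y_def zt_def a_def b_def \<theta>_def \<Delta>_def \<Delta>F_def by simp
    have "G (x, F x, 0) = (x, F x, 0)" using hU[OF xU] by simp
    then show v0': "v 0 = 0" unfolding v_def Y0 by simp
    have "G (x', F x', 0) = (x', F x', 0)" using hU[OF x'U] by simp
    then show v1': "v 1 = 0" unfolding v_def Y1 by simp
    show "\<gamma> 0 = x" unfolding \<gamma>_def v0' zt_def \<theta>_def by simp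
    show "\<gamma> 1 = x'" unfolding \<gamma>_def v1' zt_def \<theta>_def \<Delta>_def by simp
  qed
  have vmvt: "norm (v t) \<le> \<tau> * \<rho> * t \<and> norm (v t) \<le> \<tau> * \<rho> * (1 - t)" if t: "t \<in> {0..1}" for t
  proof -
    have d: "\<And>s. s \<in> {0..1} \<Longrightarrow> (v has_vector_derivative vd s) (at s)" using vder sub01 by auto
    have "norm (v t - v 0) \<le> \<tau> * \<rho> * \<bar>t - 0\<bar>" by (rule vec_mvt[OF d vd_bnd]) (use t in auto)
    moreover have "norm (v t - v 1) \<le> \<tau> * \<rho> * \<bar>t - 1\<bar>" by (rule vec_mvt[OF d vd_bnd]) (use t in auto)
    ultimately show ?thesis using t v0 v1 by auto
  qed
  have vth: "norm (v t) \<le> \<theta> t * rB" if t: "t \<in> {0..1}" for t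
  proof -
    have kr: "0 \<le> \<kappa> * rB * \<rho>" using k0 rho0 r1pos by simp
    have tau_le: "\<tau> * \<rho> \<le> (\<kappa> * rB / 2) * \<rho>" using n6 rho0 by (rule mult_right_mono)
    have th: "\<theta> t * rB = (\<kappa> * rB * \<rho>) * (t * (1 - t))" unfolding \<theta>_def by (simp add: algebra_simps)
    show ?thesis
    proof (cases "t \<le> 1/2")
      case True
      have "norm (v t) \<le> \<tau> * \<rho> * t" using vmvt[OF t] by simp
      also have "\<dots> \<le> (\<kappa> * rB / 2) * \<rho> * t" by (rule mult_right_mono[OF tau_le]) (use t in auto)
      also have "\<dots> = (\<kappa> * rB * \<rho>) * (t * (1/2))" by simp
      also have "\<dots> \<le> (\<kappa> * rB * \<rho>) * (t * (1 - t))" using True t kr by (intro mult_left_mono) auto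
      finally show ?thesis unfolding th .
    next
      case False
      have "norm (v t) \<le> \<tau> * \<rho> * (1 - t)" using vmvt[OF t] by simp
      also have "\<dots> \<le> (\<kappa> * rB / 2) * \<rho> * (1 - t)" by (rule mult_right_mono[OF tau_le]) (use t in auto)
      also have "\<dots> = (\<kappa> * rB * \<rho>) * ((1/2) * (1 - t))" by simp
      also have "\<dots> \<le> (\<kappa> * rB * \<rho>) * (t * (1 - t))"
        by (rule mult_left_mono[OF mult_right_mono[of "1/2" t "1 - t"] kr]) (use False t in auto)
      finally show ?thesis unfolding th .
    qed
  qed
  have gC: "\<gamma> t \<in> C" if t: "t \<in> {0..1}" for t
  proof -
    have tU: "t \<in> U" using sub01 t by auto
    have Fg: "F (\<gamma> t) = a t + J (v t)" using Uprops[OF tU] by simp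
    have "F (\<gamma> t) \<in> D"
    proof (cases "\<theta> t = 0")
      case True
      then have "v t = 0" using vth[OF t] by simp
      then show ?thesis using Fg True bD[OF t] unfolding a_def by simp
    next
      case False
      then have thp: "\<theta> t > 0" using th_bnd[OF t] by simp
      have th1: "\<theta> t \<le> 1" using th_r[OF t] n4 by simp
      have "norm ((1 / \<theta> t) *\<^sub>R v t) \<le> rB" using vth[OF t] thp by (simp add: field_simps)
      then have qD: "Fb + L c + J ((1 / \<theta> t) *\<^sub>R v t) \<in> D" using Dball unfolding Fb_def by blast
      have "F (\<gamma> t) = (1 - \<theta> t) *\<^sub>R b t + \<theta> t *\<^sub>R (Fb + L c + J ((1 / \<theta> t) *\<^sub>R v t))"
        using Fg thp unfolding a_def p0c_def by (simp add: blinfun.scaleR_right scaleR_add_right)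
      then show ?thesis using convexD[OF cvx bD[OF t] qD, of "1 - \<theta> t" "\<theta> t"] thp th1 by simp
    qed
    then show ?thesis using gV[OF tU] CV by auto
  qed
  have dbnd: "norm (vector_derivative \<gamma> (at t within {0..1}) - (x' - x)) \<le> \<epsilon> * norm (x' - x)" if t: "t \<in> {0..1}" for t
  proof -
    have tU: "t \<in> U" using sub01 t by auto
    have "(\<gamma> has_vector_derivative \<gamma>' t) (at t within {0..1})"
      using vder[OF tU] by (simp add: has_vector_derivative_at_within)
    then have vd_eq: "vector_derivative \<gamma> (at t within {0..1}) = \<gamma>' t"
      by (rule vector_derivative_within_closed_interval[rotated 2]) (use t in auto)
    have "\<gamma>' t - (x' - x) = \<theta>' t *\<^sub>R c + M (vd t)" unfolding \<gamma>'_def zt'_def \<Delta>_def by simp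
    then have "norm (\<gamma>' t - (x' - x)) \<le> \<bar>\<theta>' t\<bar> * norm c + norm M * norm (vd t)"
      using norm_triangle_ineq[of "\<theta>' t *\<^sub>R c" "M (vd t)"] norm_blinfun[of M "vd t"] by simp
    also have "\<dots> \<le> (\<kappa> * \<rho>) * norm c + norm M * (\<tau> * \<rho>)"
      using thp_bnd[OF t] vd_bnd[OF t] by (intro add_mono mult_right_mono mult_left_mono) auto
    also have "\<dots> = \<rho> * (\<kappa> * norm c + norm M * \<tau>)" by (simp add: algebra_simps)
    also have "\<dots> \<le> \<rho> * \<epsilon>" using n7 rho0 by (rule mult_left_mono)
    finally show ?thesis unfolding vd_eq \<rho>_def \<Delta>_def by (simp add: mult.commute)
  qed
  show ?thesis
  proof (intro exI[of _ \<gamma>] conjI ballI)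
    show "smooth_curve_segment C 0 1 \<gamma>" unfolding smooth_curve_segment_def
      using gC oU sub01 vder gcont' by (intro conjI exI[of _ U] exI[of _ \<gamma>] exI[of _ \<gamma>']) auto
  qed (use g0 g1 dbnd in auto)
qed

lemma analytic_main:
  fixes F :: "'a::euclidean_space \<Rightarrow> 'b::euclidean_space" and F' :: "'a \<Rightarrow> 'a \<Rightarrow>\<^sub>L 'b"
    and M :: "'b \<Rightarrow>\<^sub>L 'a" and J :: "'b \<Rightarrow>\<^sub>L 'b" and c :: 'a
  assumes oV: "open V" and xV: "xbar \<in> V"
    and derF: "\<forall>x\<in>V. (F has_derivative blinfun_apply (F' x)) (at x)"
    and contF': "continuous_on V F'"
    and cvx: "convex D" and CV: "C \<inter> V = {x\<in>V. F x \<in> D}"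
    and LM: "\<forall>y. F' xbar (M y) - J y = y"
    and r1pos: "0 < rB" and Dball: "\<forall>u. norm u \<le> rB \<longrightarrow> F xbar + F' xbar c + J u \<in> D"
  shows "smoothly_approx_convex C xbar"
proof -
  obtain U' Vs G G' where U'o: "open U'" and p0U: "(xbar, F xbar, 0) \<in> U'" and Vso: "open Vs"
    and p0V: "(xbar, F xbar, 0) \<in> Vs"
    and hom: "homeomorphism U' Vs (\<lambda>p::'a\<times>'b\<times>'b. (fst p, fst (snd p), F (fst p + M (snd (snd p))) - fst (snd p) - J (snd (snd p)))) G"
    and hD: "\<And>y. y \<in> Vs \<Longrightarrow> (G has_derivative G' y) (at y)"
    and hR: "\<And>y k. y \<in> Vs \<Longrightarrow> (fst (G' y k), fst (snd (G' y k)),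
        F' (fst (G y) + M (snd (snd (G y)))) (fst (G' y k) + M (snd (snd (G' y k)))) - fst (snd (G' y k)) - J (snd (snd (G' y k)))) = k"
    using psi_inverse[OF oV xV derF contF' LM] by blast
  have hU: "\<And>p. p \<in> U' \<Longrightarrow> G (fst p, fst (snd p), F (fst p + M (snd (snd p))) - fst (snd p) - J (snd (snd p))) = p"
    using hom unfolding homeomorphism_def by auto
  have hV: "\<And>y. y \<in> Vs \<Longrightarrow> (fst (G y), fst (snd (G y)), F (fst (G y) + M (snd (snd (G y)))) - fst (snd (G y)) - J (snd (snd (G y)))) = y"
    using hom unfolding homeomorphism_def by auto
  have hc: "continuous_on Vs G" using hom unfolding homeomorphism_def by auto
  define p0 :: "'a\<times>'b\<times>'b" where "p0 = (xbar, F xbar, 0)"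
  have Gp0: "G p0 = p0" using hU[OF p0U] unfolding p0_def by simp
  define L where "L = F' xbar"
  define nL where "nL = norm L"
  define nc where "nc = norm c"
  define nM where "nM = norm M"
  have nL0: "nL \<ge> 0" and nc0: "nc \<ge> 0" and nM0: "nM \<ge> 0" unfolding nL_def nc_def nM_def by auto
  show ?thesis unfolding smoothly_approx_convex_def
  proof (intro allI impI)
    fix \<epsilon> :: real assume ep: "\<epsilon> > 0"
    define \<kappa> where "\<kappa> = \<epsilon> / (2 * (nc + 1))"
    have k0: "\<kappa> > 0" unfolding \<kappa>_def using ep nc0 by simp
    have knc: "\<kappa> * nc \<le> \<epsilon> / 2"
    proof -
      have "\<kappa> * nc = (\<epsilon> / 2) * (nc / (nc + 1))" unfolding \<kappa>_def by (simp add: field_simps)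
      also have "\<dots> \<le> (\<epsilon> / 2) * 1" using ep nc0 by (intro mult_left_mono) auto
      finally show ?thesis by simp
    qed
    define \<tau> where "\<tau> = min (\<kappa> * rB / 2) (\<epsilon> / (2 * (nM + 1)))"
    have t0: "\<tau> > 0" unfolding \<tau>_def using k0 r1pos ep nM0 by simp
    have tM: "nM * \<tau> \<le> \<epsilon> / 2"
    proof -
      have "nM * \<tau> \<le> nM * (\<epsilon> / (2 * (nM + 1)))" unfolding \<tau>_def using nM0 by (intro mult_left_mono) auto
      also have "\<dots> = (\<epsilon> / 2) * (nM / (nM + 1))" using nM0 by (simp add: field_simps)
      also have "\<dots> \<le> (\<epsilon> / 2) * 1" using ep nM0 by (intro mult_left_mono) auto
      finally show ?thesis by simp
    qed
    define \<eta> where "\<eta> = min (1 / (2 * (nM + 1))) (\<tau> / (3 * (4 + 2 * \<kappa> * nc)))"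
    have e0: "\<eta> > 0" unfolding \<eta>_def using t0 k0 nc0 nM0 by (simp add: add_pos_nonneg)
    have eM: "\<eta> * nM \<le> 1/2"
    proof -
      have "\<eta> * nM \<le> (1 / (2 * (nM + 1))) * nM" unfolding \<eta>_def using nM0 by (intro mult_right_mono) auto
      also have "\<dots> = (1/2) * (nM / (nM + 1))" by (simp add: field_simps)
      also have "\<dots> \<le> (1/2) * 1" using nM0 by (intro mult_left_mono) auto
      finally show ?thesis by simp
    qed
    have e1: "\<eta> \<le> 1" unfolding \<eta>_def using nM0 by (simp add: min_le_iff_disj field_simps)
    have e5: "(4 + 2 * \<kappa> * nc) * \<eta> \<le> \<tau> / 3"
    proof -
      have pos: "4 + 2 * \<kappa> * nc > 0" using k0 nc0 by (simp add: add_pos_nonneg)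
      have "(4 + 2 * \<kappa> * nc) * \<eta> \<le> (4 + 2 * \<kappa> * nc) * (\<tau> / (3 * (4 + 2 * \<kappa> * nc)))"
        unfolding \<eta>_def using pos by (intro mult_left_mono) auto
      also have "\<dots> = \<tau> / 3" using pos by (simp add: field_simps)
      finally show ?thesis .
    qed
    obtain r0 where r0p: "r0 > 0" and r0V: "ball xbar r0 \<subseteq> V" and r0L: "\<And>y. y \<in> ball xbar r0 \<Longrightarrow> norm (F' y - L) \<le> \<eta>"
    proof -
      obtain d1 where d1: "d1 > 0" "ball xbar d1 \<subseteq> V" using oV xV open_contains_ball by blast
      obtain d2 where d2: "d2 > 0" "\<And>y. y \<in> V \<Longrightarrow> dist y xbar < d2 \<Longrightarrow> dist (F' y) (F' xbar) < \<eta>"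
        using contF' xV e0 unfolding continuous_on_iff by blast
      show ?thesis
      proof (rule that[of "min d1 d2"])
        show "min d1 d2 > 0" using d1 d2 by simp
        show "ball xbar (min d1 d2) \<subseteq> V" using d1 by auto
        show "norm (F' y - L) \<le> \<eta>" if "y \<in> ball xbar (min d1 d2)" for y
          using that d1 d2(2)[of y] unfolding L_def by (auto simp: dist_norm norm_minus_commute)
      qed
    qed
    obtain \<rho>1 where rho1: "\<rho>1 > 0" "ball p0 \<rho>1 \<subseteq> U'" using U'o p0U open_contains_ball unfolding p0_def by blast
    define \<delta>v where "\<delta>v = r0 / (2 * (nM + 1))"
    have dv0: "\<delta>v > 0" unfolding \<delta>v_def using r0p nM0 by simp
    have Mdv: "nM * \<delta>v \<le> r0 / 2"
    proof -
      have "nM * \<delta>v = (r0 / 2) * (nM / (nM + 1))" unfolding \<delta>v_def using nM0 by (simp add: field_simps)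
      also have "\<dots> \<le> (r0 / 2) * 1" using r0p nM0 by (intro mult_left_mono) auto
      finally show ?thesis by simp
    qed
    obtain \<delta>2 where d2p: "\<delta>2 > 0" and d2r0: "\<delta>2 \<le> r0 / 2"
      and d2: "\<And>Y. dist Y (xbar, F xbar, 0) < \<delta>2 \<Longrightarrow> Y \<in> Vs \<and> norm (snd (snd (G Y))) < \<delta>v"
    proof -
      obtain da where da: "da > 0" "\<And>Y. Y \<in> Vs \<Longrightarrow> dist Y p0 < da \<Longrightarrow> dist (G Y) (G p0) < \<delta>v"
        using hc p0V dv0 unfolding continuous_on_iff p0_def by blast
      obtain db where db: "db > 0" "ball p0 db \<subseteq> Vs" using Vso p0V open_contains_ball unfolding p0_def by blast
      show ?thesis
      proof (rule that[of "min (min da db) (r0 / 2)"])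
        show "min (min da db) (r0 / 2) > 0" using da db r0p by simp
        show "min (min da db) (r0 / 2) \<le> r0 / 2" by simp
        fix Y :: "'a\<times>'b\<times>'b" assume Y: "dist Y (xbar, F xbar, 0) < min (min da db) (r0 / 2)"
        then have YV: "Y \<in> Vs" using db unfolding p0_def by (auto simp: dist_commute)
        then have "dist (G Y) p0 < \<delta>v" using da(2)[OF YV] Y Gp0 unfolding p0_def by auto
        moreover have "norm (snd (snd (G Y))) \<le> dist (G Y) p0"
        proof -
          have ns: "norm (snd q) \<le> norm q" for q :: "'c::real_normed_vector \<times> 'd::real_normed_vector"
            by (metis norm_snd_le prod.collapse)
          have "norm (snd (snd (G Y - p0))) \<le> norm (G Y - p0)" using ns[of "snd (G Y - p0)"] ns[of "G Y - p0"] by linarith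
          then show ?thesis unfolding p0_def dist_norm by simp
        qed
        ultimately show "Y \<in> Vs \<and> norm (snd (snd (G Y))) < \<delta>v" using YV by simp
      qed
    qed
    define \<beta> where "\<beta> = min (min (\<delta>2 / 4) (\<rho>1 / 2)) (\<tau> / (6 * \<kappa>))"
    have b0: "\<beta> > 0" unfolding \<beta>_def using d2p rho1 t0 k0 by simp
    have b2: "2 * \<kappa> * \<beta> \<le> \<tau> / 3"
    proof -
      have "2 * \<kappa> * \<beta> \<le> 2 * \<kappa> * (\<tau> / (6 * \<kappa>))" unfolding \<beta>_def using k0 by (intro mult_left_mono) auto
      also have "\<dots> = \<tau> / 3" using k0 by (simp add: field_simps)
      finally show ?thesis .
    qed
    obtain rF where rF: "rF > 0" "\<And>y. dist y xbar < rF \<Longrightarrow> norm (F y - F xbar) < \<beta>"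
    proof -
      have "isCont F xbar" using derF xV has_derivative_continuous by blast
      then obtain d where "d > 0" "\<And>y. dist y xbar < d \<Longrightarrow> dist (F y) (F xbar) < \<beta>"
        using b0 unfolding continuous_at_eps_delta by blast
      then show ?thesis using that[of d] by (simp add: dist_norm)
    qed
    define r where "r = min (min (min r0 rF) (min (\<rho>1 / 2) (\<tau> / (3 * \<kappa> * (nL + 1)))))
                          (min (min (\<delta>2 / (8 * (1 + \<kappa> * nc))) (\<delta>2 / (4 * \<kappa> * (nL * nc + 1)))) (1 / \<kappa>))"
    have rp: "r > 0"
    proof -
      have "nL * nc + 1 > 0" using mult_nonneg_nonneg[OF nL0 nc0] by linarith
      then have "\<delta>2 / (4 * \<kappa> * (nL * nc + 1)) > 0" using d2p k0 by simp
      then show ?thesis unfolding r_def using r0p rF rho1 t0 k0 nL0 nc0 d2p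
        by (simp add: add_pos_nonneg)
    qed
    have rr0: "r \<le> r0" unfolding r_def by (rule min.coboundedI1, rule min.coboundedI1, rule min.coboundedI1) simp
    have rrF: "r \<le> rF" unfolding r_def by (rule min.coboundedI1, rule min.coboundedI1, rule min.coboundedI2) simp
    have rrho: "r \<le> \<rho>1 / 2" unfolding r_def by (rule min.coboundedI1, rule min.coboundedI2, rule min.coboundedI1) simp
    have r_4: "r \<le> \<tau> / (3 * \<kappa> * (nL + 1))" unfolding r_def by (rule min.coboundedI1, rule min.coboundedI2, rule min.coboundedI2) simp
    have r_1: "r \<le> \<delta>2 / (8 * (1 + \<kappa> * nc))" unfolding r_def by (rule min.coboundedI2, rule min.coboundedI1, rule min.coboundedI1) simp
    have r_2: "r \<le> \<delta>2 / (4 * \<kappa> * (nL * nc + 1))" unfolding r_def by (rule min.coboundedI2, rule min.coboundedI1, rule min.coboundedI2) simp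
    have r_3: "r \<le> 1 / \<kappa>" unfolding r_def by (rule min.coboundedI2, rule min.coboundedI2) simp
    have n1: "r * (1 + \<kappa> * nc) \<le> \<delta>2 / 8"
    proof -
      have pos: "1 + \<kappa> * nc > 0" using k0 nc0 by (simp add: add_pos_nonneg)
      have "r * (1 + \<kappa> * nc) \<le> (\<delta>2 / (8 * (1 + \<kappa> * nc))) * (1 + \<kappa> * nc)"
        using pos by (intro mult_right_mono) (use r_1 in auto)
      also have "\<dots> = \<delta>2 / 8" using pos by (simp add: field_simps)
      finally show ?thesis .
    qed
    have n3: "\<kappa> * r * (nL * nc) \<le> \<delta>2 / 4"
    proof -
      have "nL * nc + 1 > 0" using mult_nonneg_nonneg[OF nL0 nc0] by linarith
      then have pos: "\<kappa> * (nL * nc + 1) > 0" using k0 by simp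
      have "\<kappa> * r * (nL * nc) \<le> \<kappa> * r * (nL * nc + 1)" using k0 rp by (intro mult_left_mono) auto
      also have "\<dots> = r * (\<kappa> * (nL * nc + 1))" by simp
      also have "\<dots> \<le> (\<delta>2 / (4 * \<kappa> * (nL * nc + 1))) * (\<kappa> * (nL * nc + 1))"
        using pos by (intro mult_right_mono) (use r_2 in auto)
      also have "\<dots> = \<delta>2 / 4" using pos by (simp add: field_simps)
      finally show ?thesis .
    qed
    have n4: "\<kappa> * r \<le> 1"
    proof -
      have "\<kappa> * r \<le> \<kappa> * (1 / \<kappa>)" using k0 by (intro mult_left_mono) (use r_3 in auto)
      then show ?thesis using k0 by simp
    qed
    have n4': "\<kappa> * r * (nL + 1) \<le> \<tau> / 3"
    proof -
      have pos: "\<kappa> * (nL + 1) > 0" using k0 nL0 by simp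
      have "\<kappa> * r * (nL + 1) = r * (\<kappa> * (nL + 1))" by simp
      also have "\<dots> \<le> (\<tau> / (3 * \<kappa> * (nL + 1))) * (\<kappa> * (nL + 1))"
        using pos by (intro mult_right_mono) (use r_4 in auto)
      also have "\<dots> = \<tau> / 3" using pos by (simp add: field_simps)
      finally show ?thesis .
    qed
    have n5: "4 * \<eta> + \<kappa> * r * (nL + 1) + 2 * \<kappa> * \<beta> + 2 * \<kappa> * \<eta> * nc \<le> \<tau>"
      using e5 n4' b2 by (simp add: algebra_simps)
    have n6: "\<tau> \<le> \<kappa> * rB / 2" unfolding \<tau>_def by (rule min.cobounded1)
    have n7: "\<kappa> * nc + nM * \<tau> \<le> \<epsilon>" using knc tM by simp
    have n2: "\<beta> \<le> \<delta>2 / 4" unfolding \<beta>_def by (rule min.coboundedI1, rule min.cobounded1)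
    show "\<exists>W. open W \<and> xbar \<in> W \<and> (\<forall>x\<in>C \<inter> W. \<forall>x'\<in>C \<inter> W. \<exists>\<gamma>. smooth_curve_segment C 0 1 \<gamma> \<and>
            \<gamma> 0 = x \<and> \<gamma> 1 = x' \<and>
            (\<forall>t\<in>{0..1}. norm (vector_derivative \<gamma> (at t within {0..1}) - (x' - x))
                            \<le> \<epsilon> * norm (x' - x)))"
    proof (intro exI[of _ "ball xbar r"] conjI ballI)
      show "open (ball xbar r)" by simp
      show "xbar \<in> ball xbar r" using rp by simp
      fix x x' assume x: "x \<in> C \<inter> ball xbar r" and x': "x' \<in> C \<inter> ball xbar r"
      have xr: "dist x xbar < r" and x'r: "dist x' xbar < r" using x x' by (auto simp: dist_commute)
      have Fx: "norm (F x - F xbar) < \<beta>" and Fx': "norm (F x' - F xbar) < \<beta>"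
        using rF(2) xr x'r rrF by auto
      have inU: "(y, F y, 0) \<in> U'" if "dist y xbar < r" "norm (F y - F xbar) < \<beta>" for y
      proof -
        have "dist (y, F y, 0::'b) p0 \<le> norm (y - xbar) + norm (F y - F xbar)"
          unfolding p0_def dist_norm using norm_Pair_le[of "y - xbar" "(F y - F xbar, 0::'b)"] by (simp add: norm_Pair)
        also have "\<dots> < \<rho>1 / 2 + \<rho>1 / 2" using that rrho unfolding \<beta>_def by (simp add: dist_norm)
        finally show ?thesis using rho1 by (auto simp: dist_commute)
      qed
      show "\<exists>\<gamma>. smooth_curve_segment C 0 1 \<gamma> \<and> \<gamma> 0 = x \<and> \<gamma> 1 = x' \<and>
            (\<forall>t\<in>{0..1}. norm (vector_derivative \<gamma> (at t within {0..1}) - (x' - x)) \<le> \<epsilon> * norm (x' - x))"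
      proof (rule curve_exists[where F=F and F'=F' and M=M and J=J and c=c and L=L and G=G and G'=G'
              and U'=U' and Vs=Vs and V=V and xbar=xbar and rA=r0 and \<eta>=\<eta> and dA=\<delta>2 and dB=\<delta>v
              and rB=rB and D=D and C=C and r=r and \<beta>=\<beta> and \<kappa>=\<kappa> and \<tau>=\<tau>])
        show "\<forall>y. L (M y) - J y = y" using LM L_def by simp
        show "\<forall>u. norm u \<le> rB \<longrightarrow> F xbar + L c + J u \<in> D" using Dball L_def by simp
      qed (use hU hV hc hD hR derF contF' r0V r0L d2 d2r0 Mdv cvx CV x x' xr x'r inU Fx Fx' k0 rp rr0 e0 eM e1
            n1 n2 n3 n4 n5 n6 n7 L_def r1pos
            in \<open>simp_all add: nL_def nc_def nM_def\<close>)
    qed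
  qed
qed

theorem theorem3p14:
  fixes C :: "'a::euclidean_space set" and xbar :: 'a
    and V :: "'a set" and F :: "'a \<Rightarrow> 'b::euclidean_space" and D :: "'b set"
  assumes "xbar \<in> C"
    and "amenable_via C xbar V F D"
  shows "smoothly_approx_convex C xbar"
proof -
  obtain F' where oV: "open V" and xV: "xbar \<in> V"
    and derF: "\<forall>x\<in>V. (F has_derivative blinfun_apply (F' x)) (at x)" and contF': "continuous_on V F'"
    and cvx: "convex D" and CV: "C \<inter> V = {x\<in>V. F x \<in> D}"
    and cq: "\<forall>y\<in>normal_cone_cvx D (F xbar). adjoint (blinfun_apply (F' xbar)) y = 0 \<longrightarrow> y = 0"
    using assms(2) unfolding amenable_via_def by blast
  have FbD: "F xbar \<in> D" using assms(1) xV CV by blast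
  have lin: "linear (blinfun_apply (F' xbar))" by (rule bounded_linear.linear[OF blinfun.bounded_linear_right])
  obtain M J c r where linM: "linear M" and linJ: "linear J" and r: "r > 0"
    and LM: "\<forall>y. F' xbar (M y) - J y = y" and Db: "\<forall>u. norm u \<le> r \<longrightarrow> F xbar + F' xbar c + J u \<in> D"
    using cq_construct[OF lin cvx FbD cq] by blast
  have blM: "bounded_linear M" and blJ: "bounded_linear J"
    using linM linJ by (simp_all add: linear_conv_bounded_linear)
  show ?thesis
  proof (rule analytic_main[OF oV xV derF contF' cvx CV, where M="Blinfun M" and J="Blinfun J" and c=c and rB=r])
    show "\<forall>y. F' xbar (blinfun_apply (Blinfun M) y) - blinfun_apply (Blinfun J) y = y"
      using LM blM blJ by (simp add: bounded_linear_Blinfun_apply)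
    show "\<forall>u. norm u \<le> r \<longrightarrow> F xbar + F' xbar c + blinfun_apply (Blinfun J) u \<in> D"
      using Db blJ by (simp add: bounded_linear_Blinfun_apply)
  qed (rule r)
qed

end
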